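(* Let $A\subseteq[n]^2$ satisfy $|\{v\in[n]:(u,v)\in A\}|=T$ for every $u\in[n]$, and set $S=n-2T-2$. With the gates $\Gamma=\Gamma(A)$, $\Gamma_\uparrow=\Gamma_\uparrow(A)$ and $\Phi$ defined below, for every $x\in\{0,1\}^{4n}$ satisfying $\varphi_{one}(x)$, $$\frac{\mathrm{Sig}(\Gamma_\uparrow,x)-\mathrm{Sig}(\Gamma,x)-S\cdot\mathrm{Sig}(\Phi,x)}{4}=[\varphi_{prop}(x)\wedge(x_W,x_N)\in A].$$
   Context: All gates share the grid structure: vertices $b_{i,j}$, $(i,j)\in[n]^2$, the south edge of $b_{i,j}$ equals the north edge of $b_{i+1,j}$, the east edge of $b_{i,j}$ equals the west edge of $b_{i,j+1}$; $4n$ dangling edges ordered as north edges of the top row, east edges of the last column, south edges of the bottom row, west edges of the first column; $x=x_Nx_Ex_Sx_W$, weight-one strings $0^{v-1}10^{n-v}$ identified with $v$. $\Phi$: all $b_{i,j}$ have signature $\mathtt{PASS}$, plus an extra edge of weight $-1$ joining two extra vertices of signature $\mathtt{HW}_{=1}$. $\Gamma(A)$: apices $a_1,a_2$ with $\mathtt{HW}_{=1}$; $b_\tau$ has $\mathtt{PASS}$ for $\tau\notin A$, and for $\tau\in A$ is joined to $a_1,a_2$ (5th, 6th edges) and has $\mathtt{PRE}$. $\Gamma_\uparrow(A)$: $\Gamma(A)$ with an extra row of $n$ vertices above row $1$ and below row $n$, inserted into the columns (the outermost new edges becoming the northern/southern dangling edges), each new vertex joined to $a_1,a_2$ with signature $h(a,c,z_5,z_6)=\mathtt{PRE}(a0c0z_5z_6)$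 on (north, south, $a_1$-edge, $a_2$-edge). Weights $1$ unless stated. $\mathtt{HW}_{=1}$: $1$ iff exactly one incident edge active. $\mathtt{PASS}(1111)=-1$, $\mathtt{PASS}(0000)=\mathtt{PASS}(0101)=\mathtt{PASS}(1010)=1$, else $0$ (bits north, east, south, west); $\mathtt{PRE}(x00)=\mathtt{PASS}(x)$, $\mathtt{PRE}(xy)=1$ for $xy\in\{101011,111111,100001,110101,001010,011110\}$, else $0$. $\varphi_{one}(x)\equiv\mathrm{hw}(x_N)=\mathrm{hw}(x_W)=1$; $\varphi_{prop}(x)\equiv x_N=x_S\wedge x_W=x_E$; $[\cdot]$ is the Iverson bracket. $\mathrm{Sig}(\Gamma,x)=\sum_y w_\Gamma(xy)\prod_v f_v((xy)|_{I(v)})$ over assignments $y$ to non-dangling edges, $w_\Gamma$ the product of weights of active edges. *)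

theory Defs
  imports Complex_Main
begin

text \<open>Bit strings are bool lists (True = 1). PASS has bits (north, east, south, west).\<close>

fun PASS :: "bool list \<Rightarrow> int" where
  "PASS [True, True, True, True] = -1"
| "PASS [False, False, False, False] = 1"
| "PASS [False, True, False, True] = 1"
| "PASS [True, False, True, False] = 1"
| "PASS _ = 0"

definition PRE :: "bool list \<Rightarrow> int" where
  "PRE xs =
    (if length xs = 6 \<and> drop 4 xs = [False, False] then PASS (take 4 xs)
     else if xs \<in> {[True,False,True,False,True,True], [True,True,True,True,True,True],
                    [True,False,False,False,False,True], [True,True,False,True,False,True],
                    [False,False,True,False,True,False], [False,True,True,True,True,False]}
     then 1 else 0)"

definition HW1 :: "('e \<Rightarrow> bool) \<Rightarrow> 'e set \<Rightarrow> int" where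
  "HW1 \<sigma> I = (if card {e \<in> I. \<sigma> e} = 1 then 1 else 0)"

definition hsig :: "bool \<Rightarrow> bool \<Rightarrow> bool \<Rightarrow> bool \<Rightarrow> int" where
  "hsig a c z5 z6 = PRE [a, False, c, False, z5, z6]"

definition Sig :: "'e set \<Rightarrow> 'e set \<Rightarrow> ('e \<Rightarrow> int) \<Rightarrow> 'v set \<Rightarrow> ('v \<Rightarrow> ('e \<Rightarrow> bool) \<Rightarrow> int)
                   \<Rightarrow> ('e \<Rightarrow> bool) \<Rightarrow> int" where
  "Sig Inn Dang w Vs f d =
     (\<Sum>\<sigma> \<in> {\<sigma>. \<forall>e. e \<notin> Inn \<longrightarrow> \<sigma> e = d e}.
        (\<Prod>e \<in> Inn \<union> Dang. if \<sigma> e then w e else 1) * (\<Prod>v \<in> Vs. f v \<sigma>))"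

text \<open>Edges: dangling DN j (north of column j), DE i (east of row i), DS j, DW i;
  VI i j: vertical edge between rows i and i+1 in column j; HI i j: horizontal edge
  between columns j and j+1 in row i; E1 i j / E2 i j: edge from b_{i,j} to apex a1 / a2;
  XE: the extra edge of Phi.\<close>
datatype edge = DN nat | DE nat | DS nat | DW nat | VI nat nat | HI nat nat
  | E1 nat nat | E2 nat nat | XE

datatype vert = B nat nat | Ap1 | Ap2 | Y1 | Y2

definition dangling :: "nat \<Rightarrow> edge set" where
  "dangling n = DN ` {1..n} \<union> DE ` {1..n} \<union> DS ` {1..n} \<union> DW ` {1..n}"

text \<open>x = x_N x_E x_S x_W, each block listed in increasing column / row index.\<close>
fun dang :: "nat \<Rightarrow> bool list \<Rightarrow> edge \<Rightarrow> bool" where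
  "dang n x (DN j) = x ! (j - 1)"
| "dang n x (DE i) = x ! (n + i - 1)"
| "dang n x (DS j) = x ! (2 * n + j - 1)"
| "dang n x (DW i) = x ! (3 * n + i - 1)"
| "dang n x _ = False"

definition xN :: "nat \<Rightarrow> bool list \<Rightarrow> bool list" where "xN n x = take n x"
definition xE :: "nat \<Rightarrow> bool list \<Rightarrow> bool list" where "xE n x = take n (drop n x)"
definition xS :: "nat \<Rightarrow> bool list \<Rightarrow> bool list" where "xS n x = take n (drop (2*n) x)"
definition xW :: "nat \<Rightarrow> bool list \<Rightarrow> bool list" where "xW n x = take n (drop (3*n) x)"

definition hw :: "bool list \<Rightarrow> nat" where "hw s = length (filter id s)"

text \<open>weight-one string 0^{v-1} 1 0^{n-v} identified with v\<close>
definition ident :: "bool list \<Rightarrow> nat" where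
  "ident s = (THE v. 1 \<le> v \<and> v \<le> length s \<and> s ! (v - 1))"

definition phi_one :: "nat \<Rightarrow> bool list \<Rightarrow> bool" where
  "phi_one n x \<longleftrightarrow> hw (xN n x) = 1 \<and> hw (xW n x) = 1"

definition phi_prop :: "nat \<Rightarrow> bool list \<Rightarrow> bool" where
  "phi_prop n x \<longleftrightarrow> xN n x = xS n x \<and> xW n x = xE n x"

text \<open>Incident edges of grid vertex b_{i,j}, rows t..b (t top row, b bottom row).\<close>
definition nE :: "nat \<Rightarrow> nat \<Rightarrow> nat \<Rightarrow> edge" where
  "nE t i j = (if i = t then DN j else VI (i - 1) j)"
definition sE :: "nat \<Rightarrow> nat \<Rightarrow> nat \<Rightarrow> edge" where
  "sE b i j = (if i = b then DS j else VI i j)"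
definition eE :: "nat \<Rightarrow> nat \<Rightarrow> nat \<Rightarrow> edge" where
  "eE n i j = (if j = n then DE i else HI i j)"
definition wE :: "nat \<Rightarrow> nat \<Rightarrow> edge" where
  "wE i j = (if j = 1 then DW i else HI i (j - 1))"

definition grid_internal :: "nat \<Rightarrow> nat \<Rightarrow> nat \<Rightarrow> edge set" where
  "grid_internal n t b =
     {VI i j | i j. t \<le> i \<and> i < b \<and> 1 \<le> j \<and> j \<le> n}
   \<union> {HI i j | i j. 1 \<le> i \<and> i \<le> n \<and> 1 \<le> j \<and> j < n}"

definition grid_verts :: "nat \<Rightarrow> vert set" where
  "grid_verts n = {B i j | i j. 1 \<le> i \<and> i \<le> n \<and> 1 \<le> j \<and> j \<le> n}"

definition pass_bits :: "nat \<Rightarrow> nat \<Rightarrow> nat \<Rightarrow> nat \<Rightarrow> nat \<Rightarrow> (edge \<Rightarrow> bool) \<Rightarrow> bool list" where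
  "pass_bits n t b i j \<sigma> = [\<sigma> (nE t i j), \<sigma> (eE n i j), \<sigma> (sE b i j), \<sigma> (wE i j)]"

definition unit_weight :: "edge \<Rightarrow> int" where "unit_weight e = 1"

definition Phi_w :: "edge \<Rightarrow> int" where
  "Phi_w e = (if e = XE then -1 else 1)"

fun Phi_f :: "nat \<Rightarrow> vert \<Rightarrow> (edge \<Rightarrow> bool) \<Rightarrow> int" where
  "Phi_f n (B i j) \<sigma> = PASS (pass_bits n 1 n i j \<sigma>)"
| "Phi_f n Y1 \<sigma> = HW1 \<sigma> {XE}"
| "Phi_f n Y2 \<sigma> = HW1 \<sigma> {XE}"
| "Phi_f n _ \<sigma> = 1"

definition SigPhi :: "nat \<Rightarrow> bool list \<Rightarrow> int" where
  "SigPhi n x = Sig (grid_internal n 1 n \<union> {XE}) (dangling n) Phi_w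
                    (grid_verts n \<union> {Y1, Y2}) (Phi_f n) (dang n x)"

definition apex_edges1 :: "(nat \<times> nat) set \<Rightarrow> edge set" where
  "apex_edges1 P = (\<lambda>(i, j). E1 i j) ` P"
definition apex_edges2 :: "(nat \<times> nat) set \<Rightarrow> edge set" where
  "apex_edges2 P = (\<lambda>(i, j). E2 i j) ` P"

fun Gamma_f :: "nat \<Rightarrow> (nat \<times> nat) set \<Rightarrow> vert \<Rightarrow> (edge \<Rightarrow> bool) \<Rightarrow> int" where
  "Gamma_f n A (B i j) \<sigma> =
     (if (i, j) \<in> A then PRE (pass_bits n 1 n i j \<sigma> @ [\<sigma> (E1 i j), \<sigma> (E2 i j)])
      else PASS (pass_bits n 1 n i j \<sigma>))"
| "Gamma_f n A Ap1 \<sigma> = HW1 \<sigma> (apex_edges1 A)"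
| "Gamma_f n A Ap2 \<sigma> = HW1 \<sigma> (apex_edges2 A)"
| "Gamma_f n A _ \<sigma> = 1"

definition SigGamma :: "nat \<Rightarrow> (nat \<times> nat) set \<Rightarrow> bool list \<Rightarrow> int" where
  "SigGamma n A x = Sig (grid_internal n 1 n \<union> apex_edges1 A \<union> apex_edges2 A) (dangling n)
                        unit_weight (grid_verts n \<union> {Ap1, Ap2}) (Gamma_f n A) (dang n x)"

text \<open>Extra rows 0 (above row 1) and n+1 (below row n).\<close>
definition up_set :: "nat \<Rightarrow> (nat \<times> nat) set" where
  "up_set n = {(i, j). (i = 0 \<or> i = n + 1) \<and> 1 \<le> j \<and> j \<le> n}"

fun GammaUp_f :: "nat \<Rightarrow> (nat \<times> nat) set \<Rightarrow> vert \<Rightarrow> (edge \<Rightarrow> bool) \<Rightarrow> int" where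
  "GammaUp_f n A (B i j) \<sigma> =
     (if i = 0 \<or> i = n + 1 then
        hsig (\<sigma> (nE 0 i j)) (\<sigma> (sE (n + 1) i j)) (\<sigma> (E1 i j)) (\<sigma> (E2 i j))
      else if (i, j) \<in> A then PRE (pass_bits n 0 (n + 1) i j \<sigma> @ [\<sigma> (E1 i j), \<sigma> (E2 i j)])
      else PASS (pass_bits n 0 (n + 1) i j \<sigma>))"
| "GammaUp_f n A Ap1 \<sigma> = HW1 \<sigma> (apex_edges1 (A \<union> up_set n))"
| "GammaUp_f n A Ap2 \<sigma> = HW1 \<sigma> (apex_edges2 (A \<union> up_set n))"
| "GammaUp_f n A _ \<sigma> = 1"

definition SigGammaUp :: "nat \<Rightarrow> (nat \<times> nat) set \<Rightarrow> bool list \<Rightarrow> int" where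
  "SigGammaUp n A x =
     Sig (grid_internal n 0 (n + 1) \<union> apex_edges1 (A \<union> up_set n) \<union> apex_edges2 (A \<union> up_set n))
         (dangling n) unit_weight
         (grid_verts n \<union> (\<lambda>(i, j). B i j) ` up_set n \<union> {Ap1, Ap2}) (GammaUp_f n A) (dang n x)"

end

theory Submission
  imports Defs
begin

definition L :: "bool \<Rightarrow> bool \<Rightarrow> bool \<Rightarrow> bool \<Rightarrow> bool \<Rightarrow> bool \<Rightarrow> int" where
 "L N E S W z5 z6 = (if E = W \<and> S = (N \<noteq> (z5 \<noteq> z6)) \<and> (z6 \<longrightarrow> N) \<and> (z5 \<and> \<not> z6 \<longrightarrow> \<not> N)
     then (if N \<and> W \<and> \<not> z5 \<and> \<not> z6 then -1 else 1) else 0)"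

lemma PASS_L: "PASS [N,E,S,W] = L N E S W False False"
  by (cases N; cases E; cases S; cases W; simp add: L_def)

lemma PRE_L: "PRE [N,E,S,W,z5,z6] = L N E S W z5 z6"
  by (cases N; cases E; cases S; cases W; cases z5; cases z6; simp add: L_def PRE_def)

lemma hsig_L: "hsig N S z5 z6 = L N False S False z5 z6"
  by (simp add: hsig_def PRE_L)

definition gv :: "nat \<Rightarrow> nat \<Rightarrow> nat \<Rightarrow> nat \<Rightarrow> nat \<Rightarrow> (edge \<Rightarrow> bool) \<Rightarrow> int" where
 "gv n t bt i j \<sigma> = (if 1 \<le> i \<and> i \<le> n
    then L (\<sigma> (nE t i j)) (\<sigma> (eE n i j)) (\<sigma> (sE bt i j)) (\<sigma> (wE i j)) (\<sigma> (E1 i j)) (\<sigma> (E2 i j))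
    else L (\<sigma> (nE t i j)) False (\<sigma> (sE bt i j)) False (\<sigma> (E1 i j)) (\<sigma> (E2 i j)))"

definition genInn :: "nat \<Rightarrow> nat \<Rightarrow> nat \<Rightarrow> (nat \<times> nat) set \<Rightarrow> bool \<Rightarrow> edge set" where
 "genInn n t bt P xe = grid_internal n t bt \<union> apex_edges1 P \<union> apex_edges2 P \<union> (if xe then {XE} else {})"

definition DD :: "nat \<Rightarrow> nat \<Rightarrow> nat \<Rightarrow> (nat \<times> nat) set \<Rightarrow> bool \<Rightarrow> bool list \<Rightarrow> (edge \<Rightarrow> bool) set" where
 "DD n t bt P xe x = {\<sigma>. \<forall>e. e \<notin> genInn n t bt P xe \<longrightarrow> \<sigma> e = dang n x e}"

lemma genInn_simps[simp]:
  "VI i j \<in> genInn n t bt P xe \<longleftrightarrow> t \<le> i \<and> i < bt \<and> 1 \<le> j \<and> j \<le> n"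
  "HI i j \<in> genInn n t bt P xe \<longleftrightarrow> 1 \<le> i \<and> i \<le> n \<and> 1 \<le> j \<and> j < n"
  "E1 i j \<in> genInn n t bt P xe \<longleftrightarrow> (i, j) \<in> P"
  "E2 i j \<in> genInn n t bt P xe \<longleftrightarrow> (i, j) \<in> P"
  "XE \<in> genInn n t bt P xe \<longleftrightarrow> xe"
  "DN k \<notin> genInn n t bt P xe" "DE k \<notin> genInn n t bt P xe"
  "DS k \<notin> genInn n t bt P xe" "DW k \<notin> genInn n t bt P xe"
  by (auto simp: genInn_def grid_internal_def apex_edges1_def apex_edges2_def)

lemma finite_genInn: "finite P \<Longrightarrow> finite (genInn n t bt P xe)"
proof -
  assume fP: "finite P"
  have "grid_internal n t bt \<subseteq> (\<lambda>(i,j). VI i j) ` ({t..bt} \<times> {1..n}) \<union> (\<lambda>(i,j). HI i j) ` ({1..n} \<times> {1..n})"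
    by (auto simp: grid_internal_def)
  then have "finite (grid_internal n t bt)" by (rule finite_subset) auto
  then show ?thesis using fP by (simp add: genInn_def apex_edges1_def apex_edges2_def)
qed

lemma finite_DD: assumes "finite P" shows "finite (DD n t bt P xe x)"
proof -
  let ?I = "genInn n t bt P xe"
  have "DD n t bt P xe x \<subseteq> (\<lambda>S e. if e \<in> ?I then e \<in> S else dang n x e) ` Pow ?I"
  proof
    fix \<sigma> assume "\<sigma> \<in> DD n t bt P xe x"
    then have "\<sigma> = (\<lambda>e. if e \<in> ?I then e \<in> {e \<in> ?I. \<sigma> e} else dang n x e)"
      by (auto simp: DD_def)
    then show "\<sigma> \<in> (\<lambda>S e. if e \<in> ?I then e \<in> S else dang n x e) ` Pow ?I" by blast
  qed
  moreover have "finite (Pow ?I)" using finite_genInn[OF assms] by simp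
  ultimately show ?thesis by (meson finite_imageI finite_subset)
qed

fun cv :: "nat \<Rightarrow> nat \<Rightarrow> bool list \<Rightarrow> (nat\<Rightarrow>nat\<Rightarrow>bool) \<Rightarrow> (nat\<Rightarrow>nat\<Rightarrow>bool) \<Rightarrow> nat \<Rightarrow> nat \<Rightarrow> bool" where
  "cv n t x z5 z6 j 0 = dang n x (DN j)"
| "cv n t x z5 z6 j (Suc k) = (cv n t x z5 z6 j k \<noteq> (z5 (t+k) j \<noteq> z6 (t+k) j))"

definition cfg :: "nat \<Rightarrow> nat \<Rightarrow> nat \<Rightarrow> bool list \<Rightarrow> (nat\<Rightarrow>nat\<Rightarrow>bool) \<Rightarrow> (nat\<Rightarrow>nat\<Rightarrow>bool) \<Rightarrow> bool \<Rightarrow> edge \<Rightarrow> bool" where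
 "cfg n t bt x z5 z6 xe e = (case e of
     VI i j \<Rightarrow> (if t \<le> i \<and> i < bt \<and> 1 \<le> j \<and> j \<le> n then cv n t x z5 z6 j (Suc i - t) else False)
   | HI i j \<Rightarrow> (if 1 \<le> i \<and> i \<le> n \<and> 1 \<le> j \<and> j < n then dang n x (DW i) else False)
   | E1 i j \<Rightarrow> z5 i j | E2 i j \<Rightarrow> z6 i j | XE \<Rightarrow> xe | _ \<Rightarrow> dang n x e)"

lemma gv_nz: "gv n t bt i j \<sigma> \<noteq> 0 \<Longrightarrow> \<sigma> (sE bt i j) = (\<sigma> (nE t i j) \<noteq> (\<sigma> (E1 i j) \<noteq> \<sigma> (E2 i j)))
   \<and> (1 \<le> i \<and> i \<le> n \<longrightarrow> \<sigma> (eE n i j) = \<sigma> (wE i j))"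
  by (cases "1 \<le> i \<and> i \<le> n") (auto simp: gv_def L_def split: if_splits)

lemma determ:
  assumes D: "\<sigma> \<in> DD n t bt P xe x" and t1: "t \<le> 1" and nb: "n \<le> bt"
    and nz: "\<And>i j. t \<le> i \<Longrightarrow> i \<le> bt \<Longrightarrow> 1 \<le> j \<Longrightarrow> j \<le> n \<Longrightarrow> gv n t bt i j \<sigma> \<noteq> 0"
  shows "\<sigma> = cfg n t bt x (\<lambda>i j. \<sigma> (E1 i j)) (\<lambda>i j. \<sigma> (E2 i j)) (\<sigma> XE)"
proof -
  define z5 where "z5 = (\<lambda>i j. \<sigma> (E1 i j))"
  define z6 where "z6 = (\<lambda>i j. \<sigma> (E2 i j))"
  have Dv: "\<And>e. e \<notin> genInn n t bt P xe \<Longrightarrow> \<sigma> e = dang n x e" using D by (auto simp: DD_def)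
  have V: "\<sigma> (VI (t+k) j) = cv n t x z5 z6 j (Suc k)" if "1 \<le> j" "j \<le> n" "t + k < bt" for j k
    using that(3)
  proof (induction k)
    case 0
    have "gv n t bt t j \<sigma> \<noteq> 0" using nz[of t j] that 0 by simp
    from gv_nz[OF this] 0 show ?case
      by (simp add: nE_def sE_def Dv z5_def z6_def)
  next
    case (Suc k)
    have IH: "\<sigma> (VI (t+k) j) = cv n t x z5 z6 j (Suc k)" using Suc by simp
    have "gv n t bt (t + Suc k) j \<sigma> \<noteq> 0" using nz[of "t + Suc k" j] that Suc by simp
    from gv_nz[OF this] IH Suc.prems show ?case
      by (simp add: nE_def sE_def z5_def z6_def)
  qed
  have H: "\<sigma> (HI i j) = dang n x (DW i)" if "1 \<le> i" "i \<le> n" "1 \<le> j" "j < n" for i j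
    using that(3,4)
  proof (induction j)
    case 0 then show ?case by simp
  next
    case (Suc j)
    have "gv n t bt i (Suc j) \<sigma> \<noteq> 0" using nz[of i "Suc j"] that Suc t1 nb by simp
    from gv_nz[OF this] that Suc show ?case
      by (cases "j = 0") (auto simp: eE_def wE_def Dv)
  qed
  show ?thesis
  proof
    fix e show "\<sigma> e = cfg n t bt x (\<lambda>i j. \<sigma> (E1 i j)) (\<lambda>i j. \<sigma> (E2 i j)) (\<sigma> XE) e"
    proof (cases e)
      case (VI i j)
      show ?thesis
      proof (cases "t \<le> i \<and> i < bt \<and> 1 \<le> j \<and> j \<le> n")
        case True
        then obtain k where "i = t + k" by (metis le_add_diff_inverse)
        then show ?thesis using V[of j k] True VI by (simp add: cfg_def z5_def z6_def)
      next
        case False then show ?thesis using VI Dv[of e] by (auto simp: cfg_def)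
      qed
    next
      case (HI i j)
      then show ?thesis using H[of i j] Dv[of e] by (auto simp: cfg_def)
    qed (auto simp: cfg_def Dv)
  qed
qed



lemma sum_reduce:
  assumes "finite D" "g ` Q \<subseteq> D" "inj_on g Q" "\<And>\<sigma>. \<sigma> \<in> D \<Longrightarrow> s \<sigma> \<noteq> 0 \<Longrightarrow> \<sigma> \<in> g ` Q"
  shows "sum s D = sum (\<lambda>q. s (g q)) Q"
proof -
  have "sum s (g ` Q) = sum s D"
    by (rule sum.mono_neutral_left) (use assms in auto)
  then have "sum s D = sum s (g ` Q)" by simp
  also have "\<dots> = sum (\<lambda>q. s (g q)) Q" using sum.reindex[OF assms(3)] by (simp add: comp_def)
  finally show ?thesis .
qed

lemma prod_sign:
  assumes "finite X"
  shows "(\<Prod>p\<in>X. if ok p then (if ng p then -1 else 1) else (0::int))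
       = (if \<forall>p\<in>X. ok p then (-1) ^ card {p\<in>X. ng p} else 0)"
  using assms
proof (induction X rule: finite_induct)
  case empty then show ?case by simp
next
  case (insert p F)
  have c: "{q \<in> insert p F. ng q} = (if ng p then insert p {q\<in>F. ng q} else {q\<in>F. ng q})" by auto
  have "finite {q\<in>F. ng q}" using insert by simp
  moreover have "p \<notin> {q\<in>F. ng q}" using insert by simp
  ultimately show ?case using insert c by (auto simp: card_insert_if)
qed

definition NC :: "nat \<Rightarrow> nat \<Rightarrow> bool list \<Rightarrow> (nat\<Rightarrow>nat\<Rightarrow>bool) \<Rightarrow> (nat\<Rightarrow>nat\<Rightarrow>bool) \<Rightarrow> nat \<Rightarrow> nat \<Rightarrow> bool" where
  "NC n t x z5 z6 i j = cv n t x z5 z6 j (i - t)"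

definition okc where
  "okc n t bt x z5 z6 i j \<longleftrightarrow>
     ((1 \<le> i \<and> i \<le> n \<and> j = n) \<longrightarrow> dang n x (DE i) = dang n x (DW i))
   \<and> (i = bt \<longrightarrow> dang n x (DS j) = cv n t x z5 z6 j (Suc (i - t)))
   \<and> (z6 i j \<longrightarrow> NC n t x z5 z6 i j) \<and> (z5 i j \<and> \<not> z6 i j \<longrightarrow> \<not> NC n t x z5 z6 i j)"

definition ngc where
  "ngc n t x z5 z6 i j \<longleftrightarrow> NC n t x z5 z6 i j \<and> (1 \<le> i \<and> i \<le> n \<and> dang n x (DW i)) \<and> \<not> z5 i j \<and> \<not> z6 i j"

lemma L_eq: assumes "(E = W) \<longleftrightarrow> c1" "(S = (N \<noteq> (z5 \<noteq> z6))) \<longleftrightarrow> c2"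
  shows "L N E S W z5 z6 = (if c1 \<and> c2 \<and> (z6 \<longrightarrow> N) \<and> (z5 \<and> \<not> z6 \<longrightarrow> \<not> N)
     then (if N \<and> W \<and> \<not> z5 \<and> \<not> z6 then -1 else 1) else 0)"
  using assms by (simp add: L_def)

lemma gv_cfg:
  assumes "t \<le> i" "i \<le> bt" "1 \<le> j" "j \<le> n" "t \<le> 1" "n \<le> bt"
  shows "gv n t bt i j (cfg n t bt x z5 z6 xe) =
     (if okc n t bt x z5 z6 i j then (if ngc n t x z5 z6 i j then -1 else 1) else 0)"
proof -
  let ?s = "cfg n t bt x z5 z6 xe"
  have N: "?s (nE t i j) = NC n t x z5 z6 i j"
  proof (cases "i = t")
    case True then show ?thesis by (simp add: nE_def cfg_def NC_def)
  next
    case False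
    then have "Suc (i - 1) - t = i - t" "t \<le> i - 1" "i - 1 < bt" using assms by auto
    then show ?thesis using False assms by (simp add: nE_def cfg_def NC_def)
  qed
  have S: "?s (sE bt i j) = (if i = bt then dang n x (DS j) else cv n t x z5 z6 j (Suc (i - t)))"
    using assms by (auto simp: sE_def cfg_def Suc_diff_le)
  have S2: "cv n t x z5 z6 j (Suc (i - t)) = (NC n t x z5 z6 i j \<noteq> (z5 i j \<noteq> z6 i j))"
    using assms by (simp add: NC_def)
  have S3: "i = bt \<Longrightarrow> cv n t x z5 z6 j (Suc (bt - t)) = (NC n t x z5 z6 bt j \<noteq> (z5 bt j \<noteq> z6 bt j))"
    using S2 by simp
  have EW: "1 \<le> i \<Longrightarrow> i \<le> n \<Longrightarrow> ?s (eE n i j) = (if j = n then dang n x (DE i) else dang n x (DW i))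
            \<and> ?s (wE i j) = dang n x (DW i)"
    using assms by (auto simp: eE_def wE_def cfg_def)
  have E12: "?s (E1 i j) = z5 i j" "?s (E2 i j) = z6 i j" by (auto simp: cfg_def)
  have c2: "(?s (sE bt i j) = (NC n t x z5 z6 i j \<noteq> (z5 i j \<noteq> z6 i j))) \<longleftrightarrow>
      (i = bt \<longrightarrow> dang n x (DS j) = cv n t x z5 z6 j (Suc (i - t)))"
    unfolding S S2 by auto
  show ?thesis
  proof (cases "1 \<le> i \<and> i \<le> n")
    case True
    have c1: "(?s (eE n i j) = ?s (wE i j)) \<longleftrightarrow> (j = n \<longrightarrow> dang n x (DE i) = dang n x (DW i))"
      using EW True by auto
    have W: "?s (wE i j) = dang n x (DW i)" using EW True by auto
    show ?thesis
      apply (unfold gv_def if_P[OF True])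
      apply (unfold N E12)
      apply (subst L_eq[OF c1 c2])
      apply (unfold W okc_def ngc_def)
      using True apply (simp del: cv.simps dang.simps)
      done
  next
    case False
    have c1: "(False = False) \<longleftrightarrow> ((1 \<le> i \<and> i \<le> n \<and> j = n) \<longrightarrow> dang n x (DE i) = dang n x (DW i))"
      using False by auto
    show ?thesis
      apply (unfold gv_def if_not_P[OF False])
      apply (unfold N E12)
      apply (subst L_eq[OF c1 c2])
      apply (unfold okc_def ngc_def)
      using False apply (simp del: cv.simps dang.simps)
      apply blast
      done
  qed
qed

lemma gridprod:
  assumes "t \<le> 1" "n \<le> bt"
  shows "(\<Prod>p\<in>{t..bt}\<times>{1..n}. gv n t bt (fst p) (snd p) (cfg n t bt x z5 z6 xe)) =
    (if \<forall>p\<in>{t..bt}\<times>{1..n}. okc n t bt x z5 z6 (fst p) (snd p)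
     then (-1) ^ card {p\<in>{t..bt}\<times>{1..n}. ngc n t x z5 z6 (fst p) (snd p)} else 0)"
proof -
  have "(\<Prod>p\<in>{t..bt}\<times>{1..n}. gv n t bt (fst p) (snd p) (cfg n t bt x z5 z6 xe)) =
      (\<Prod>p\<in>{t..bt}\<times>{1..n}. if okc n t bt x z5 z6 (fst p) (snd p)
          then (if ngc n t x z5 z6 (fst p) (snd p) then -1 else 1) else 0)"
    by (rule prod.cong) (use assms gv_cfg in auto)
  then show ?thesis by (simp add: prod_sign)
qed

lemma HW1_unique:
  assumes "HW1 \<sigma> (apex_edges1 P) \<noteq> 0" "\<sigma> \<in> DD n t bt P xe x"
  shows "\<exists>a\<in>P. \<forall>i j. \<sigma> (E1 i j) = ((i, j) = a)"
proof -
  have "card {e \<in> apex_edges1 P. \<sigma> e} = 1" using assms(1) by (simp add: HW1_def split: if_splits)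
  then obtain e0 where e0: "{e \<in> apex_edges1 P. \<sigma> e} = {e0}" by (auto simp: card_Suc_eq)
  then have "e0 \<in> apex_edges1 P" by auto
  then obtain a where a: "a \<in> P" "e0 = E1 (fst a) (snd a)" by (auto simp: apex_edges1_def)
  have "\<sigma> (E1 i j) = ((i, j) = a)" for i j
  proof (cases "(i, j) \<in> P")
    case True
    then have "E1 i j \<in> apex_edges1 P" by (force simp: apex_edges1_def)
    then have "\<sigma> (E1 i j) \<longleftrightarrow> E1 i j \<in> {e0}" using e0 by blast
    then show ?thesis using a by auto
  next
    case False
    then have "\<sigma> (E1 i j) = dang n x (E1 i j)" using assms(2) by (auto simp: DD_def)
    then show ?thesis using False a by auto
  qed
  then show ?thesis using a by blast
qed

lemma HW2_unique:
  assumes "HW1 \<sigma> (apex_edges2 P) \<noteq> 0" "\<sigma> \<in> DD n t bt P xe x"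
  shows "\<exists>a\<in>P. \<forall>i j. \<sigma> (E2 i j) = ((i, j) = a)"
proof -
  have "card {e \<in> apex_edges2 P. \<sigma> e} = 1" using assms(1) by (simp add: HW1_def split: if_splits)
  then obtain e0 where e0: "{e \<in> apex_edges2 P. \<sigma> e} = {e0}" by (auto simp: card_Suc_eq)
  then have "e0 \<in> apex_edges2 P" by auto
  then obtain a where a: "a \<in> P" "e0 = E2 (fst a) (snd a)" by (auto simp: apex_edges2_def)
  have "\<sigma> (E2 i j) = ((i, j) = a)" for i j
  proof (cases "(i, j) \<in> P")
    case True
    then have "E2 i j \<in> apex_edges2 P" by (force simp: apex_edges2_def)
    then have "\<sigma> (E2 i j) \<longleftrightarrow> E2 i j \<in> {e0}" using e0 by blast
    then show ?thesis using a by auto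
  next
    case False
    then have "\<sigma> (E2 i j) = dang n x (E2 i j)" using assms(2) by (auto simp: DD_def)
    then show ?thesis using False a by auto
  qed
  then show ?thesis using a by blast
qed

lemma HW1_cfg: "a \<in> P \<Longrightarrow> HW1 (cfg n t bt x (\<lambda>i j. (i,j) = a) z6 xe) (apex_edges1 P) = 1"
proof -
  assume "a \<in> P"
  then have "{e \<in> apex_edges1 P. cfg n t bt x (\<lambda>i j. (i,j) = a) z6 xe e} = {E1 (fst a) (snd a)}"
    by (force simp: apex_edges1_def cfg_def)
  then show ?thesis by (simp add: HW1_def)
qed

lemma HW2_cfg: "b \<in> P \<Longrightarrow> HW1 (cfg n t bt x z5 (\<lambda>i j. (i,j) = b) xe) (apex_edges2 P) = 1"
proof -
  assume "b \<in> P"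
  then have "{e \<in> apex_edges2 P. cfg n t bt x z5 (\<lambda>i j. (i,j) = b) xe e} = {E2 (fst b) (snd b)}"
    by (force simp: apex_edges2_def cfg_def)
  then show ?thesis by (simp add: HW1_def)
qed

definition GP where
  "GP n t bt \<sigma> = (\<Prod>p\<in>{t..bt}\<times>{1..n}. gv n t bt (fst p) (snd p) \<sigma>)"

lemma sig_pairs:
  assumes fP: "finite P" and Psub: "P \<subseteq> {t..bt} \<times> {1..n}" and t1: "t \<le> 1" and nb: "n \<le> bt"
    and s: "\<And>\<sigma>. \<sigma> \<in> DD n t bt P False x \<Longrightarrow>
        s \<sigma> = GP n t bt \<sigma> * HW1 \<sigma> (apex_edges1 P) * HW1 \<sigma> (apex_edges2 P)"
  shows "sum s (DD n t bt P False x) =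
     (\<Sum>q\<in>P\<times>P. GP n t bt (cfg n t bt x (\<lambda>i j. (i,j) = fst q) (\<lambda>i j. (i,j) = snd q) False))"
proof -
  define g where "g q = cfg n t bt x (\<lambda>i j. (i,j) = fst q) (\<lambda>i j. (i,j) = snd q) False" for q
  have "sum s (DD n t bt P False x) = sum (\<lambda>q. s (g q)) (P \<times> P)"
  proof (rule sum_reduce)
    show "finite (DD n t bt P False x)" by (rule finite_DD[OF fP])
    show "g ` (P \<times> P) \<subseteq> DD n t bt P False x"
    proof
      fix \<sigma> assume "\<sigma> \<in> g ` (P \<times> P)"
      then obtain a b where ab: "a \<in> P" "b \<in> P" "\<sigma> = g (a, b)" by auto
      show "\<sigma> \<in> DD n t bt P False x" unfolding DD_def
      proof (intro CollectI allI impI)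
        fix e assume "e \<notin> genInn n t bt P False"
        then show "\<sigma> e = dang n x e" using ab
          by (cases e) (auto simp: g_def cfg_def)
      qed
    qed
    show "inj_on g (P \<times> P)"
    proof (rule inj_onI)
      fix p q assume pq: "p \<in> P \<times> P" "q \<in> P \<times> P" "g p = g q"
      have "g p (E1 (fst (fst p)) (snd (fst p))) = g q (E1 (fst (fst p)) (snd (fst p)))"
           "g p (E2 (fst (snd p)) (snd (snd p))) = g q (E2 (fst (snd p)) (snd (snd p)))"
        using pq by auto
      then have "fst p = fst q" "snd p = snd q" by (auto simp: g_def cfg_def)
      then show "p = q" by (simp add: prod_eq_iff)
    qed
    fix \<sigma> assume D: "\<sigma> \<in> DD n t bt P False x" and nz: "s \<sigma> \<noteq> 0"
    then have nz1: "GP n t bt \<sigma> \<noteq> 0" "HW1 \<sigma> (apex_edges1 P) \<noteq> 0" "HW1 \<sigma> (apex_edges2 P) \<noteq> 0"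
      using s[OF D] by auto
    obtain a where a: "a \<in> P" "\<forall>i j. \<sigma> (E1 i j) = ((i, j) = a)" using HW1_unique[OF nz1(2) D] by blast
    obtain b where b: "b \<in> P" "\<forall>i j. \<sigma> (E2 i j) = ((i, j) = b)" using HW2_unique[OF nz1(3) D] by blast
    have gnz: "gv n t bt i j \<sigma> \<noteq> 0" if "t \<le> i" "i \<le> bt" "1 \<le> j" "j \<le> n" for i j
    proof
      assume "gv n t bt i j \<sigma> = 0"
      then have "GP n t bt \<sigma> = 0" unfolding GP_def
        by (subst prod_zero_iff) (use that in force)+
      then show False using nz1 by simp
    qed
    have XE: "\<sigma> XE = False" using D by (auto simp: DD_def)
    have "\<sigma> = cfg n t bt x (\<lambda>i j. \<sigma> (E1 i j)) (\<lambda>i j. \<sigma> (E2 i j)) (\<sigma> XE)"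
      by (rule determ[OF D t1 nb gnz])
    also have "\<dots> = g (a, b)" using a b XE by (simp add: g_def)
    finally show "\<sigma> \<in> g ` (P \<times> P)" using a b by blast
  qed
  also have "\<dots> = (\<Sum>q\<in>P\<times>P. GP n t bt (g q))"
  proof (rule sum.cong)
    fix q assume q: "q \<in> P \<times> P"
    have D: "g q \<in> DD n t bt P False x" unfolding DD_def
    proof (intro CollectI allI impI)
      fix e assume "e \<notin> genInn n t bt P False"
      then show "g q e = dang n x e" using q
        by (cases e) (auto simp: g_def cfg_def)
    qed
    show "s (g q) = GP n t bt (g q)"
      using s[OF D] q HW1_cfg[of "fst q" P] HW2_cfg[of "snd q" P] by (auto simp: g_def)
  qed simp
  finally show ?thesis by (simp add: g_def)
qed



lemma prod_B_img: "(\<Prod>v\<in>(\<lambda>p. B (fst p) (snd p)) ` X. f v) = (\<Prod>p\<in>X. f (B (fst p) (snd p)))"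
  by (subst prod.reindex) (auto simp: inj_on_def prod_eq_iff comp_def)

lemma grid_verts_img: "grid_verts n = (\<lambda>p. B (fst p) (snd p)) ` ({1..n} \<times> {1..n})"
  by (auto simp: grid_verts_def image_iff)

lemma up_verts_img: "grid_verts n \<union> (\<lambda>(i, j). B i j) ` up_set n = (\<lambda>p. B (fst p) (snd p)) ` ({0..n+1} \<times> {1..n})"
proof -
  have eq: "{1..n} \<times> {1..n} \<union> up_set n = {0..n+1} \<times> {1..n}"
    by (auto simp: up_set_def)
  have e: "(\<lambda>(i,j). B i j) = (\<lambda>p. B (fst p) (snd p))" by auto
  show ?thesis unfolding grid_verts_img e image_Un[symmetric] eq ..
qed

lemma uw: "(\<Prod>e\<in>S. if \<sigma> e then unit_weight e else 1) = (1::int)"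
  unfolding unit_weight_def by simp

lemma finite_dangling: "finite (dangling n)" by (simp add: dangling_def)

lemma pass_bits_eq: "pass_bits n t b i j \<sigma> = [\<sigma> (nE t i j), \<sigma> (eE n i j), \<sigma> (sE b i j), \<sigma> (wE i j)]"
  by (simp add: pass_bits_def)

lemma Gamma_f_gv:
  assumes "\<sigma> \<in> DD n 1 n A False x" "1 \<le> i" "i \<le> n"
  shows "Gamma_f n A (B i j) \<sigma> = gv n 1 n i j \<sigma>"
proof (cases "(i, j) \<in> A")
  case True then show ?thesis using assms by (simp add: gv_def pass_bits_eq PRE_L)
next
  case False
  then have "\<sigma> (E1 i j) = False" "\<sigma> (E2 i j) = False" using assms(1) by (auto simp: DD_def)
  then show ?thesis using assms False by (simp add: gv_def pass_bits_eq PASS_L)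
qed

lemma GammaUp_f_gv:
  assumes "\<sigma> \<in> DD n 0 (n+1) (A \<union> up_set n) False x" "i \<le> n + 1" "A \<subseteq> {1..n} \<times> {1..n}"
  shows "GammaUp_f n A (B i j) \<sigma> = gv n 0 (n+1) i j \<sigma>"
proof (cases "i = 0 \<or> i = n + 1")
  case True then show ?thesis by (auto simp: gv_def hsig_L)
next
  case F: False
  show ?thesis
  proof (cases "(i, j) \<in> A")
    case True then show ?thesis using F assms by (simp add: gv_def pass_bits_eq PRE_L)
  next
    case False
    then have "(i, j) \<notin> A \<union> up_set n" using F by (auto simp: up_set_def)
    then have "\<sigma> (E1 i j) = False" "\<sigma> (E2 i j) = False" using assms(1) by (auto simp: DD_def)
    then show ?thesis using assms False F by (simp add: gv_def pass_bits_eq PASS_L)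
  qed
qed

lemma SigGamma_pairs:
  assumes A: "A \<subseteq> {1..n} \<times> {1..n}"
  shows "SigGamma n A x = (\<Sum>q\<in>A\<times>A. GP n 1 n (cfg n 1 n x (\<lambda>i j. (i,j) = fst q) (\<lambda>i j. (i,j) = snd q) False))"
proof -
  have fA: "finite A" using A finite_subset by blast
  have dom: "{\<sigma>. \<forall>e. e \<notin> grid_internal n 1 n \<union> apex_edges1 A \<union> apex_edges2 A \<longrightarrow> \<sigma> e = dang n x e}
      = DD n 1 n A False x" by (simp add: DD_def genInn_def)
  show ?thesis unfolding SigGamma_def Sig_def dom
  proof (rule sig_pairs[OF fA A])
    fix \<sigma> assume D: "\<sigma> \<in> DD n 1 n A False x"
    have gv: "(\<Prod>v\<in>grid_verts n. Gamma_f n A v \<sigma>) = GP n 1 n \<sigma>"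
      unfolding grid_verts_img prod_B_img GP_def
    proof (rule prod.cong)
      fix p assume "p \<in> {1..n} \<times> {1..n}"
      then show "Gamma_f n A (B (fst p) (snd p)) \<sigma> = gv n 1 n (fst p) (snd p) \<sigma>"
        by (intro Gamma_f_gv[OF D]) auto
    qed simp
    have "grid_verts n \<union> {Ap1, Ap2} = insert Ap1 (insert Ap2 (grid_verts n))" by auto
    moreover have "finite (grid_verts n)" by (simp add: grid_verts_img)
    moreover have "Ap1 \<notin> grid_verts n" "Ap2 \<notin> grid_verts n" by (auto simp: grid_verts_def)
    ultimately have "(\<Prod>v\<in>grid_verts n \<union> {Ap1, Ap2}. Gamma_f n A v \<sigma>) =
        GP n 1 n \<sigma> * HW1 \<sigma> (apex_edges1 A) * HW1 \<sigma> (apex_edges2 A)"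
      using gv by (simp add: algebra_simps)
    then show "(\<Prod>e\<in>grid_internal n 1 n \<union> apex_edges1 A \<union> apex_edges2 A \<union> dangling n.
             if \<sigma> e then unit_weight e else 1) * (\<Prod>v\<in>grid_verts n \<union> {Ap1, Ap2}. Gamma_f n A v \<sigma>) =
        GP n 1 n \<sigma> * HW1 \<sigma> (apex_edges1 A) * HW1 \<sigma> (apex_edges2 A)"
      by (simp only: uw)
  qed auto
qed

lemma SigGammaUp_pairs:
  assumes A: "A \<subseteq> {1..n} \<times> {1..n}"
  shows "SigGammaUp n A x = (\<Sum>q\<in>(A \<union> up_set n)\<times>(A \<union> up_set n).
      GP n 0 (n+1) (cfg n 0 (n+1) x (\<lambda>i j. (i,j) = fst q) (\<lambda>i j. (i,j) = snd q) False))"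
proof -
  let ?P = "A \<union> up_set n"
  have fU: "finite (up_set n)"
    by (rule finite_subset[of _ "{0..n+1}\<times>{1..n}"]) (auto simp: up_set_def)
  have fA: "finite ?P" using A finite_subset fU by blast
  have PS: "?P \<subseteq> {0..n+1} \<times> {1..n}" using A by (auto simp: up_set_def)
  have dom: "{\<sigma>. \<forall>e. e \<notin> grid_internal n 0 (n+1) \<union> apex_edges1 ?P \<union> apex_edges2 ?P \<longrightarrow> \<sigma> e = dang n x e}
      = DD n 0 (n+1) ?P False x" by (simp add: DD_def genInn_def)
  show ?thesis unfolding SigGammaUp_def Sig_def dom
  proof (rule sig_pairs[OF fA PS])
    fix \<sigma> assume D: "\<sigma> \<in> DD n 0 (n+1) ?P False x"
    have gv: "(\<Prod>v\<in>grid_verts n \<union> (\<lambda>(i, j). B i j) ` up_set n. GammaUp_f n A v \<sigma>) = GP n 0 (n+1) \<sigma>"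
      unfolding up_verts_img prod_B_img GP_def
    proof (rule prod.cong)
      fix p assume "p \<in> {0..n+1} \<times> {1..n}"
      then show "GammaUp_f n A (B (fst p) (snd p)) \<sigma> = gv n 0 (n+1) (fst p) (snd p) \<sigma>"
        by (intro GammaUp_f_gv[OF D _ A]) auto
    qed simp
    let ?G = "grid_verts n \<union> (\<lambda>(i, j). B i j) ` up_set n"
    have "?G \<union> {Ap1, Ap2} = insert Ap1 (insert Ap2 ?G)" by auto
    moreover have "finite ?G" by (simp add: up_verts_img)
    moreover have "Ap1 \<notin> ?G" "Ap2 \<notin> ?G" by (auto simp: up_verts_img)
    ultimately have "(\<Prod>v\<in>?G \<union> {Ap1, Ap2}. GammaUp_f n A v \<sigma>) =
        GP n 0 (n+1) \<sigma> * HW1 \<sigma> (apex_edges1 ?P) * HW1 \<sigma> (apex_edges2 ?P)"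
      using gv by (simp add: algebra_simps)
    then show "(\<Prod>e\<in>grid_internal n 0 (n+1) \<union> apex_edges1 ?P \<union> apex_edges2 ?P \<union> dangling n.
             if \<sigma> e then unit_weight e else 1) * (\<Prod>v\<in>?G \<union> {Ap1, Ap2}. GammaUp_f n A v \<sigma>) =
        GP n 0 (n+1) \<sigma> * HW1 \<sigma> (apex_edges1 ?P) * HW1 \<sigma> (apex_edges2 ?P)"
      by (simp only: uw)
  qed auto
qed

lemma SigPhi_val:
  assumes n1: "1 \<le> n"
  shows "SigPhi n x = - GP n 1 n (cfg n 1 n x (\<lambda>_ _. False) (\<lambda>_ _. False) True)"
proof -
  define g where "g (u::unit) = cfg n 1 n x (\<lambda>_ _. False) (\<lambda>_ _. False) True" for u
  let ?I = "grid_internal n 1 n \<union> {XE}"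
  have dom: "{\<sigma>. \<forall>e. e \<notin> ?I \<longrightarrow> \<sigma> e = dang n x e} = DD n 1 n {} True x"
    by (simp add: DD_def genInn_def apex_edges1_def apex_edges2_def)
  define s where "s \<sigma> = (\<Prod>e\<in>?I \<union> dangling n. if \<sigma> e then Phi_w e else 1) *
      (\<Prod>v\<in>grid_verts n \<union> {Y1, Y2}. Phi_f n v \<sigma>)" for \<sigma>
  have fI: "finite (?I \<union> dangling n)"
    using finite_genInn[of "{}" n 1 n True] finite_dangling
    by (simp add: genInn_def apex_edges1_def apex_edges2_def)
  have sform: "s \<sigma> = (\<Prod>e\<in>?I \<union> dangling n. if \<sigma> e then Phi_w e else 1) * (GP n 1 n \<sigma> * HW1 \<sigma> {XE} * HW1 \<sigma> {XE})"
    if D: "\<sigma> \<in> DD n 1 n {} True x" for \<sigma>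
  proof -
    have gv: "(\<Prod>v\<in>grid_verts n. Phi_f n v \<sigma>) = GP n 1 n \<sigma>"
      unfolding grid_verts_img prod_B_img GP_def
    proof (rule prod.cong)
      fix p assume "p \<in> {1..n} \<times> {1..n}"
      then obtain i j where pij: "p = (i, j)" "1 \<le> i" "i \<le> n" by auto
      have "\<sigma> (E1 (fst p) (snd p)) = False" "\<sigma> (E2 (fst p) (snd p)) = False" using D by (auto simp: DD_def)
      then show "Phi_f n (B (fst p) (snd p)) \<sigma> = gv n 1 n (fst p) (snd p) \<sigma>"
        using pij by (simp add: gv_def pass_bits_eq PASS_L)
    qed simp
    have "grid_verts n \<union> {Y1, Y2} = insert Y1 (insert Y2 (grid_verts n))" by auto
    moreover have "finite (grid_verts n)" by (simp add: grid_verts_img)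
    moreover have "Y1 \<notin> grid_verts n" "Y2 \<notin> grid_verts n" by (auto simp: grid_verts_def)
    ultimately show ?thesis using gv by (simp add: s_def algebra_simps)
  qed
  have "SigPhi n x = sum s (DD n 1 n {} True x)"
    unfolding SigPhi_def Sig_def dom s_def ..
  also have "\<dots> = sum (\<lambda>u. s (g u)) {()}"
  proof (rule sum_reduce)
    show "finite (DD n 1 n {} True x)" by (rule finite_DD) simp
    show "g ` {()} \<subseteq> DD n 1 n {} True x"
    proof
      fix \<sigma> assume "\<sigma> \<in> g ` {()}"
      then have s: "\<sigma> = g ()" by simp
      show "\<sigma> \<in> DD n 1 n {} True x" unfolding DD_def
      proof (intro CollectI allI impI)
        fix e assume "e \<notin> genInn n 1 n {} True"
        then show "\<sigma> e = dang n x e" using s by (cases e) (auto simp: g_def cfg_def)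
      qed
    qed
    show "inj_on g {()}" by simp
    fix \<sigma> assume D: "\<sigma> \<in> DD n 1 n {} True x" and nz: "s \<sigma> \<noteq> 0"
    then have nz1: "GP n 1 n \<sigma> \<noteq> 0" "HW1 \<sigma> {XE} \<noteq> 0" using sform[OF D] by auto
    have XE: "\<sigma> XE"
    proof (rule ccontr)
      assume "\<not> \<sigma> XE"
      then have "{e\<in>{XE}. \<sigma> e} = {}" by auto
      then have c: "card {e\<in>{XE}. \<sigma> e} = 0" by (simp only: card.empty)
      show False using nz1(2) unfolding HW1_def c by simp
    qed
    have E: "\<sigma> (E1 i j) = False" "\<sigma> (E2 i j) = False" for i j using D by (auto simp: DD_def)
    have gnz: "gv n 1 n i j \<sigma> \<noteq> 0" if "1 \<le> i" "i \<le> n" "1 \<le> j" "j \<le> n" for i j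
    proof
      assume "gv n 1 n i j \<sigma> = 0"
      then have "GP n 1 n \<sigma> = 0" unfolding GP_def
        by (subst prod_zero_iff) (use that in force)+
      then show False using nz1 by simp
    qed
    have "\<sigma> = cfg n 1 n x (\<lambda>i j. \<sigma> (E1 i j)) (\<lambda>i j. \<sigma> (E2 i j)) (\<sigma> XE)"
      by (rule determ[OF D _ _ gnz]) (use n1 in auto)
    also have "\<dots> = g ()" using XE E by (simp add: g_def)
    finally show "\<sigma> \<in> g ` {()}" by simp
  qed
  also have "\<dots> = s (g ())" by simp
  also have "\<dots> = - GP n 1 n (g ())"
  proof -
    have D: "g () \<in> DD n 1 n {} True x" unfolding DD_def
    proof (intro CollectI allI impI)
      fix e assume "e \<notin> genInn n 1 n {} True"
      then show "g () e = dang n x e" by (cases e) (auto simp: g_def cfg_def)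
    qed
    have hx: "{e\<in>{XE}. g () e} = {XE}" by (auto simp: g_def cfg_def)
    have h: "HW1 (g ()) {XE} = 1" unfolding HW1_def hx by simp
    have "(\<Prod>e\<in>?I \<union> dangling n. if g () e then Phi_w e else 1) =
          (\<Prod>e\<in>?I \<union> dangling n. if e = XE then -1 else 1)"
      by (rule prod.cong) (auto simp: Phi_w_def g_def cfg_def)
    also have "\<dots> = -1" using fI by (subst prod.delta) auto
    finally show ?thesis using sform[OF D] h by simp
  qed
  finally show ?thesis by (simp add: g_def)
qed



lemma cv_ab:
  "cv n t x (\<lambda>i j. (i,j) = a) (\<lambda>i j. (i,j) = b) j k =
     ((dang n x (DN j) \<noteq> (snd a = j \<and> t \<le> fst a \<and> fst a < t + k)) \<noteq> (snd b = j \<and> t \<le> fst b \<and> fst b < t + k))"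
proof (induction k)
  case 0 then show ?case by simp
next
  case (Suc k)
  have e1: "(snd a = j \<and> t \<le> fst a \<and> fst a < t + Suc k) = ((snd a = j \<and> t \<le> fst a \<and> fst a < t + k) \<noteq> ((t + k, j) = a))"
    by (cases a) auto
  have e2: "(snd b = j \<and> t \<le> fst b \<and> fst b < t + Suc k) = ((snd b = j \<and> t \<le> fst b \<and> fst b < t + k) \<noteq> ((t + k, j) = b))"
    by (cases b) auto
  show ?case unfolding e1 e2 cv.simps(2) Suc.IH by blast
qed

lemma cv_0: "cv n t x (\<lambda>_ _. False) (\<lambda>_ _. False) j k = dang n x (DN j)"
  by (induction k) auto

definition cvc :: "nat \<Rightarrow> nat \<times> nat \<Rightarrow> nat \<times> nat \<Rightarrow> nat \<Rightarrow> nat \<Rightarrow> bool" where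
  "cvc c a b j i = (((j = c) \<noteq> (snd a = j \<and> fst a < i)) \<noteq> (snd b = j \<and> fst b < i))"

definition V :: "nat \<Rightarrow> bool list \<Rightarrow> nat \<Rightarrow> nat \<Rightarrow> nat \<times> nat \<Rightarrow> nat \<times> nat \<Rightarrow> int" where
  "V n x c r a b = (if (\<forall>i\<in>{1..n}. dang n x (DE i) = dang n x (DW i))
      \<and> (\<forall>j\<in>{1..n}. dang n x (DS j) = (((j = c) \<noteq> (snd a = j)) \<noteq> (snd b = j)))
      \<and> cvc c a b (snd b) (fst b) \<and> (a \<noteq> b \<longrightarrow> \<not> cvc c a b (snd a) (fst a))
     then (-1) ^ card {j\<in>{1..n}. cvc c a b j r \<and> (r, j) \<noteq> a \<and> (r, j) \<noteq> b} else 0)"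

lemma GP_V:
  assumes t1: "t \<le> 1" and nb: "n \<le> bt"
    and a: "a \<in> {t..bt} \<times> {1..n}" and b: "b \<in> {t..bt} \<times> {1..n}"
    and hc: "\<And>j. 1 \<le> j \<Longrightarrow> j \<le> n \<Longrightarrow> dang n x (DN j) = (j = c)"
    and hr: "\<And>i. 1 \<le> i \<Longrightarrow> i \<le> n \<Longrightarrow> dang n x (DW i) = (i = r)"
    and r: "1 \<le> r" "r \<le> n"
  shows "GP n t bt (cfg n t bt x (\<lambda>i j. (i,j) = a) (\<lambda>i j. (i,j) = b) False) = V n x c r a b"
proof -
  let ?z5 = "\<lambda>i j. (i,j) = a" and ?z6 = "\<lambda>i j. (i,j) = b"
  let ?R = "{t..bt} \<times> {1..n}"
  have NCe: "NC n t x ?z5 ?z6 i j = cvc c a b j i" if "t \<le> i" "1 \<le> j" "j \<le> n" for i j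
    using that a b hc[OF that(2,3)] by (auto simp: NC_def cv_ab cvc_def)
  have CVe: "cv n t x ?z5 ?z6 j (Suc (bt - t)) = (((j = c) \<noteq> (snd a = j)) \<noteq> (snd b = j))"
    if "1 \<le> j" "j \<le> n" for j
    using that a b hc[OF that] by (auto simp: cv_ab)
  have E1: "(\<forall>p\<in>?R. okc n t bt x ?z5 ?z6 (fst p) (snd p)) \<longleftrightarrow>
      (\<forall>i\<in>{1..n}. dang n x (DE i) = dang n x (DW i))
      \<and> (\<forall>j\<in>{1..n}. dang n x (DS j) = (((j = c) \<noteq> (snd a = j)) \<noteq> (snd b = j)))
      \<and> cvc c a b (snd b) (fst b) \<and> (a \<noteq> b \<longrightarrow> \<not> cvc c a b (snd a) (fst a))"
    (is "?L \<longleftrightarrow> ?C1 \<and> ?C2 \<and> ?C3 \<and> ?C4")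
  proof
    assume H: ?L
    have "?C1"
    proof
      fix i assume i: "i \<in> {1..n}"
      then have "(i, n) \<in> ?R" using t1 nb by auto
      then have "okc n t bt x ?z5 ?z6 i n" using H by auto
      then show "dang n x (DE i) = dang n x (DW i)" using i by (auto simp: okc_def)
    qed
    moreover have "?C2"
    proof
      fix j assume j: "j \<in> {1..n}"
      then have "(bt, j) \<in> ?R" using t1 nb by auto
      then have "okc n t bt x ?z5 ?z6 bt j" using H by auto
      then show "dang n x (DS j) = (((j = c) \<noteq> (snd a = j)) \<noteq> (snd b = j))"
        using CVe j by (auto simp: okc_def)
    qed
    moreover have "?C3"
    proof -
      have "okc n t bt x ?z5 ?z6 (fst b) (snd b)" using H b by auto
      then have "NC n t x ?z5 ?z6 (fst b) (snd b)" by (auto simp: okc_def)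
      then show ?thesis using NCe b by auto
    qed
    moreover have "?C4"
    proof
      assume ab: "a \<noteq> b"
      have "okc n t bt x ?z5 ?z6 (fst a) (snd a)" using H a by auto
      then have "\<not> NC n t x ?z5 ?z6 (fst a) (snd a)" using ab by (auto simp: okc_def)
      then show "\<not> cvc c a b (snd a) (fst a)" using NCe a by auto
    qed
    ultimately show "?C1 \<and> ?C2 \<and> ?C3 \<and> ?C4" by blast
  next
    assume C: "?C1 \<and> ?C2 \<and> ?C3 \<and> ?C4"
    show ?L
    proof
      fix p assume p: "p \<in> ?R"
      obtain i j where ij: "p = (i, j)" by (cases p)
      have ij2: "t \<le> i" "i \<le> bt" "1 \<le> j" "j \<le> n" using p ij by auto
      have "(i, j) = b \<longrightarrow> NC n t x ?z5 ?z6 i j" using C NCe ij2 by auto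
      moreover have "(i, j) = a \<and> (i, j) \<noteq> b \<longrightarrow> \<not> NC n t x ?z5 ?z6 i j" using C NCe ij2 by auto
      moreover have "i = bt \<longrightarrow> dang n x (DS j) = cv n t x ?z5 ?z6 j (Suc (i - t))"
        using C CVe ij2 by auto
      moreover have "1 \<le> i \<and> i \<le> n \<and> j = n \<longrightarrow> dang n x (DE i) = dang n x (DW i)" using C by auto
      ultimately show "okc n t bt x ?z5 ?z6 (fst p) (snd p)" unfolding ij okc_def by auto
    qed
  qed
  have E2: "{p\<in>?R. ngc n t x ?z5 ?z6 (fst p) (snd p)} =
      (\<lambda>j. (r, j)) ` {j\<in>{1..n}. cvc c a b j r \<and> (r, j) \<noteq> a \<and> (r, j) \<noteq> b}"
  proof (rule set_eqI)
    fix p :: "nat \<times> nat"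
    obtain i j where ij: "p = (i, j)" by (cases p)
    show "p \<in> {p\<in>?R. ngc n t x ?z5 ?z6 (fst p) (snd p)} \<longleftrightarrow>
      p \<in> (\<lambda>j. (r, j)) ` {j\<in>{1..n}. cvc c a b j r \<and> (r, j) \<noteq> a \<and> (r, j) \<noteq> b}"
    proof
      assume "p \<in> {p\<in>?R. ngc n t x ?z5 ?z6 (fst p) (snd p)}"
      then have h: "t \<le> i" "1 \<le> j" "j \<le> n" "NC n t x ?z5 ?z6 i j" "1 \<le> i" "i \<le> n" "dang n x (DW i)"
        "(i, j) \<noteq> a" "(i, j) \<noteq> b" using ij by (auto simp: ngc_def)
      then have "i = r" using hr by auto
      then show "p \<in> (\<lambda>j. (r, j)) ` {j\<in>{1..n}. cvc c a b j r \<and> (r, j) \<noteq> a \<and> (r, j) \<noteq> b}"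
        using h NCe ij by auto
    next
      assume "p \<in> (\<lambda>j. (r, j)) ` {j\<in>{1..n}. cvc c a b j r \<and> (r, j) \<noteq> a \<and> (r, j) \<noteq> b}"
      then have h: "i = r" "1 \<le> j" "j \<le> n" "cvc c a b j r" "(r, j) \<noteq> a" "(r, j) \<noteq> b" using ij by auto
      have "t \<le> r" "r \<le> bt" using t1 nb r by auto
      then show "p \<in> {p\<in>?R. ngc n t x ?z5 ?z6 (fst p) (snd p)}"
        using h NCe[of r j] hr[OF r] r ij by (auto simp: ngc_def)
    qed
  qed
  have cardE: "card {p\<in>?R. ngc n t x ?z5 ?z6 (fst p) (snd p)} =
      card {j\<in>{1..n}. cvc c a b j r \<and> (r, j) \<noteq> a \<and> (r, j) \<noteq> b}"
    unfolding E2 by (rule card_image) (auto simp: inj_on_def)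
  show ?thesis unfolding GP_def gridprod[OF t1 nb] E1 cardE V_def ..
qed

lemma GP_Phi:
  assumes n1: "1 \<le> n"
    and hc: "\<And>j. 1 \<le> j \<Longrightarrow> j \<le> n \<Longrightarrow> dang n x (DN j) = (j = c)"
    and hr: "\<And>i. 1 \<le> i \<Longrightarrow> i \<le> n \<Longrightarrow> dang n x (DW i) = (i = r)"
    and r: "1 \<le> r" "r \<le> n" and c: "1 \<le> c" "c \<le> n"
  shows "GP n 1 n (cfg n 1 n x (\<lambda>_ _. False) (\<lambda>_ _. False) True) =
     (if (\<forall>i\<in>{1..n}. dang n x (DE i) = dang n x (DW i)) \<and> (\<forall>j\<in>{1..n}. dang n x (DS j) = (j = c))
      then -1 else 0)"
proof -
  let ?z = "\<lambda>_ _. False :: bool"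
  let ?R = "{1..n} \<times> {1..n}"
  have E1: "(\<forall>p\<in>?R. okc n 1 n x ?z ?z (fst p) (snd p)) \<longleftrightarrow>
      (\<forall>i\<in>{1..n}. dang n x (DE i) = dang n x (DW i)) \<and> (\<forall>j\<in>{1..n}. dang n x (DS j) = (j = c))"
  proof
    assume H: "\<forall>p\<in>?R. okc n 1 n x ?z ?z (fst p) (snd p)"
    have "dang n x (DE i) = dang n x (DW i)" if "i \<in> {1..n}" for i
      using H[rule_format, of "(i, n)"] that n1 by (auto simp: okc_def)
    moreover have "dang n x (DS j) = (j = c)" if "j \<in> {1..n}" for j
      using H[rule_format, of "(n, j)"] that n1 hc[of j] by (auto simp: okc_def cv_0)
    ultimately show "(\<forall>i\<in>{1..n}. dang n x (DE i) = dang n x (DW i)) \<and> (\<forall>j\<in>{1..n}. dang n x (DS j) = (j = c))"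
      by blast
  next
    assume C: "(\<forall>i\<in>{1..n}. dang n x (DE i) = dang n x (DW i)) \<and> (\<forall>j\<in>{1..n}. dang n x (DS j) = (j = c))"
    show "\<forall>p\<in>?R. okc n 1 n x ?z ?z (fst p) (snd p)"
      using C hc by (auto simp: okc_def cv_0)
  qed
  have E2: "{p\<in>?R. ngc n 1 x ?z ?z (fst p) (snd p)} = {(r, c)}"
    using hc hr r c by (auto simp: ngc_def NC_def cv_0)
  show ?thesis unfolding GP_def gridprod[OF order_refl order_refl] E1 E2 by simp
qed



definition okr where "okr n x \<longleftrightarrow> (\<forall>i\<in>{1..n}. dang n x (DE i) = dang n x (DW i))"
definition es where "es n x m \<longleftrightarrow> (\<forall>j\<in>{1..n}. dang n x (DS j) = (j = m))"
definition DSc where "DSc n x c m m' \<longleftrightarrow> (\<forall>j\<in>{1..n}. dang n x (DS j) = (((j = c) \<noteq> (m = j)) \<noteq> (m' = j)))"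
definition NS where "NS c r a b n = {j\<in>{1..n}. cvc c a b j r \<and> (r, j) \<noteq> a \<and> (r, j) \<noteq> b}"

lemma V_pair: "V n x c r (k,m) (k',m') = (if okr n x \<and> DSc n x c m m' \<and> cvc c (k,m) (k',m') m' k'
   \<and> ((k,m) \<noteq> (k',m') \<longrightarrow> \<not> cvc c (k,m) (k',m') m k) then (-1) ^ card (NS c r (k,m) (k',m') n) else 0)"
  by (simp only: V_def okr_def DSc_def NS_def prod.sel)

lemma es_uniq: "es n x u \<Longrightarrow> es n x w \<Longrightarrow> u \<in> {1..n} \<Longrightarrow> u = w"
  unfolding es_def by (metis)

locale setting =
  fixes n c r :: nat and x :: "bool list"
  assumes c: "1 \<le> c" "c \<le> n" and r: "1 \<le> r" "r \<le> n"
begin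

lemma V1: assumes "1 \<le> k" "k \<le> n" "1 \<le> m" "m \<le> n" "1 \<le> j" "j \<le> n"
  shows "V n x c r (k,m) (0,j) = (if j = c \<and> okr n x \<and> es n x m then (if k < r then -1 else 1) else 0)"
proof (cases "j = c")
  case False
  then show ?thesis by (simp add: V_pair cvc_def)
next
  case True
  have v4: "cvc c (k,m) (0,j) m k = False" using True assms by (auto simp: cvc_def)
  have v3: "cvc c (k,m) (0,j) j 0 = True" using True by (simp add: cvc_def)
  have ds: "DSc n x c m j = es n x m" using True by (auto simp: DSc_def es_def)
  have ns: "NS c r (k,m) (0,j) n = (if k < r then {m} else {})" using True assms by (auto simp: NS_def cvc_def)
  show ?thesis unfolding V_pair v4 v3 ds ns using True assms by auto
qed

lemma V2: assumes "1 \<le> k" "k \<le> n" "1 \<le> m" "m \<le> n" "1 \<le> j" "j \<le> n"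
  shows "V n x c r (k,m) (n+1,j) = (if m \<noteq> c \<and> okr n x \<and> ((j = c \<and> es n x m) \<or> (j = m \<and> es n x c))
     then (if k < r then 1 else -1) else 0)"
proof -
  have v3: "cvc c (k,m) (n+1,j) j (n+1) = ((j = c) \<noteq> (m = j))" using assms by (auto simp: cvc_def)
  have v4: "cvc c (k,m) (n+1,j) m k = (m = c)" using assms by (auto simp: cvc_def)
  have ne: "((k,m) \<noteq> (n+1,j)) = True" using assms by auto
  show ?thesis
  proof (cases "m \<noteq> c \<and> (j = c \<or> j = m)")
    case False
    then have "\<not> (((j = c) \<noteq> (m = j)) \<and> \<not> (m = c))" by blast
    then show ?thesis unfolding V_pair v3 v4 ne using False by auto
  next
    case True
    have e: "(((j' = c) \<noteq> (m = j')) \<noteq> (j = j')) = (j' = (if j = c then m else c))" for j'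
      using True by auto
    have ds: "DSc n x c m j = ((j = c \<and> es n x m) \<or> (j = m \<and> es n x c))"
      unfolding DSc_def e es_def using True by auto
    have ns: "NS c r (k,m) (n+1,j) n = (if k < r then {c, m} else {c})"
    proof (cases "k < r")
      case kr: True
      have e: "cvc c (k,m) (n+1,j) j' r = ((j' = c) \<or> (j' = m))" for j'
        using assms True kr r unfolding cvc_def by auto
      show ?thesis unfolding NS_def e using assms c r kr True by auto
    next
      case kr: False
      have e: "cvc c (k,m) (n+1,j) j' r = (j' = c)" for j'
        using assms True kr r unfolding cvc_def by auto
      show ?thesis unfolding NS_def e using assms c r kr True by auto
    qed
    have v34: "((j = c) \<noteq> (m = j)) = True" "(m = c) = False" using True by auto
    show ?thesis unfolding V_pair v3 v4 ds ns ne v34 using True by auto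
  qed
qed

lemma V3: assumes "1 \<le> k" "k \<le> n" "1 \<le> m" "m \<le> n" "1 \<le> j" "j \<le> n"
  shows "V n x c r (0,j) (k,m) = (if j \<noteq> c \<and> okr n x \<and> ((m = c \<and> es n x j) \<or> (m = j \<and> es n x c))
     then (if r < k then 1 else -1) else 0)"
proof -
  have v4: "cvc c (0,j) (k,m) j 0 = (j = c)" using assms by (auto simp: cvc_def)
  have v3: "cvc c (0,j) (k,m) m k = ((m = c) \<noteq> (j = m))" using assms by (auto simp: cvc_def)
  have ne: "((0,j) \<noteq> (k,m)) = True" using assms by auto
  show ?thesis
  proof (cases "j \<noteq> c \<and> (m = c \<or> m = j)")
    case False
    then have "\<not> (((m = c) \<noteq> (j = m)) \<and> \<not> (j = c))" by blast
    then show ?thesis unfolding V_pair v3 v4 ne using False by auto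
  next
    case True
    have e: "(((j' = c) \<noteq> (j = j')) \<noteq> (m = j')) = (j' = (if m = c then j else c))" for j'
      using True by auto
    have ds: "DSc n x c j m = ((m = c \<and> es n x j) \<or> (m = j \<and> es n x c))"
      unfolding DSc_def e es_def using True by auto
    have ns: "NS c r (0,j) (k,m) n = (if r < k then {c, j} else {(if m = c then j else c)})"
    proof -
      consider (a) "r < k" | (b) "k < r" | (d) "k = r" by linarith
      then show ?thesis
      proof cases
        case a
        have e: "cvc c (0,j) (k,m) j' r = ((j' = c) \<or> (j' = j))" for j'
          using assms True a r unfolding cvc_def by auto
        show ?thesis unfolding NS_def e using assms c r a True by auto
      next
        case b
        have e: "cvc c (0,j) (k,m) j' r = (if m = c then j' = j else j' = c)" for j'
          using assms True b r unfolding cvc_def by auto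
        show ?thesis unfolding NS_def e using assms c r b True by auto
      next
        case d
        have e: "cvc c (0,j) (k,m) j' r = ((j' = c) \<or> (j' = j))" for j'
          using assms True d r unfolding cvc_def by auto
        show ?thesis unfolding NS_def e using assms c r d True by auto
      qed
    qed
    have v34: "((m = c) \<noteq> (j = m)) = True" "(j = c) = False" using True by auto
    show ?thesis unfolding V_pair v3 v4 ds ns ne v34 using True by auto
  qed
qed

lemma V4: assumes "1 \<le> k" "k \<le> n" "1 \<le> m" "m \<le> n" "1 \<le> j" "j \<le> n"
  shows "V n x c r (n+1,j) (k,m) = (if m = c \<and> okr n x \<and> es n x j then (if r < k then -1 else 1) else 0)"
proof (cases "m = c")
  case False
  then show ?thesis using assms by (auto simp: V_pair cvc_def)
next
  case True
  have v4: "cvc c (n+1,j) (k,m) j (n+1) = False" using True assms by (auto simp: cvc_def)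
  have v3: "cvc c (n+1,j) (k,m) m k = True" using True assms by (auto simp: cvc_def)
  have ds: "DSc n x c j m = es n x j" using True by (auto simp: DSc_def es_def)
  have ns: "NS c r (n+1,j) (k,m) n = (if r < k then {c} else {})" using True assms c r
    by (auto simp: NS_def cvc_def)
  show ?thesis unfolding V_pair v4 v3 ds ns using True assms by auto
qed

end


lemma U_sum: "sum f (up_set n) = (\<Sum>j\<in>{1..n}. f (0, j) + f (n+1, j))"
proof -
  have U: "up_set n = (\<lambda>j. (0, j)) ` {1..n} \<union> (\<lambda>j. (n+1, j)) ` {1..n}"
    by (auto simp: up_set_def)
  have "sum f (up_set n) = sum f ((\<lambda>j. (0, j)) ` {1..n}) + sum f ((\<lambda>j. (n+1, j)) ` {1..n})"
    unfolding U by (rule sum.union_disjoint) auto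
  also have "\<dots> = (\<Sum>j\<in>{1..n}. f (0, j)) + (\<Sum>j\<in>{1..n}. f (n+1, j))"
    by (simp add: sum.reindex inj_on_def)
  finally show ?thesis by (simp add: sum.distrib)
qed

context setting
begin

lemma U1: assumes "1 \<le> j" "j \<le> n" "1 \<le> j'" "j' \<le> n"
  shows "V n x c r (0,j) (0,j') = (if j' = c \<and> okr n x \<and> es n x j then -1 else 0)"
proof -
  have v3: "cvc c (0,j) (0,j') j' 0 = (j' = c)" by (auto simp: cvc_def)
  have v4: "cvc c (0,j) (0,j') j 0 = (j = c)" by (auto simp: cvc_def)
  show ?thesis
  proof (cases "j' = c")
    case False
    then show ?thesis unfolding V_pair v3 v4 by auto
  next
    case True
    have e: "(((j'' = c) \<noteq> (j = j'')) \<noteq> (j' = j'')) = (j'' = j)" for j''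
      using True by auto
    have ds: "DSc n x c j j' = es n x j" unfolding DSc_def e es_def by auto
    have e2: "cvc c (0,j) (0,j') j'' r = (j'' = j)" for j''
      using True r unfolding cvc_def by auto
    have ns: "NS c r (0,j) (0,j') n = {j}" unfolding NS_def e2 using assms r by auto
    show ?thesis unfolding V_pair v3 v4 ds ns using True by auto
  qed
qed

lemma U2: assumes "1 \<le> j" "j \<le> n" "1 \<le> j'" "j' \<le> n"
  shows "V n x c r (n+1,j) (n+1,j') = (if j' = c \<and> okr n x \<and> es n x j then -1 else 0)"
proof -
  have v3: "cvc c (n+1,j) (n+1,j') j' (n+1) = (j' = c)" by (auto simp: cvc_def)
  have v4: "cvc c (n+1,j) (n+1,j') j (n+1) = (j = c)" by (auto simp: cvc_def)
  show ?thesis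
  proof (cases "j' = c")
    case False
    then show ?thesis unfolding V_pair v3 v4 by auto
  next
    case True
    have e: "(((j'' = c) \<noteq> (j = j'')) \<noteq> (j' = j'')) = (j'' = j)" for j''
      using True by auto
    have ds: "DSc n x c j j' = es n x j" unfolding DSc_def e es_def by auto
    have e2: "cvc c (n+1,j) (n+1,j') j'' r = (j'' = c)" for j''
      using True r unfolding cvc_def by auto
    have ns: "NS c r (n+1,j) (n+1,j') n = {c}" unfolding NS_def e2 using assms r c by auto
    show ?thesis unfolding V_pair v3 v4 ds ns using True by auto
  qed
qed

lemma U3: assumes "1 \<le> j" "j \<le> n" "1 \<le> j'" "j' \<le> n"
  shows "V n x c r (0,j) (n+1,j') = (if j \<noteq> c \<and> okr n x \<and> ((j' = c \<and> es n x j) \<or> (j' = j \<and> es n x c)) then 1 else 0)"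
proof -
  have v3: "cvc c (0,j) (n+1,j') j' (n+1) = ((j' = c) \<noteq> (j = j'))" by (auto simp: cvc_def)
  have v4: "cvc c (0,j) (n+1,j') j 0 = (j = c)" by (auto simp: cvc_def)
  have ne: "((0,j) \<noteq> (n+1,j')) = True" by auto
  show ?thesis
  proof (cases "j \<noteq> c \<and> (j' = c \<or> j' = j)")
    case False
    then have "\<not> (((j' = c) \<noteq> (j = j')) \<and> \<not> (j = c))" by blast
    then show ?thesis unfolding V_pair v3 v4 ne using False by auto
  next
    case True
    have e: "(((j'' = c) \<noteq> (j = j'')) \<noteq> (j' = j'')) = (j'' = (if j' = c then j else c))" for j''
      using True by auto
    have ds: "DSc n x c j j' = ((j' = c \<and> es n x j) \<or> (j' = j \<and> es n x c))"
      unfolding DSc_def e es_def using True by auto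
    have e2: "cvc c (0,j) (n+1,j') j'' r = (j'' = c \<or> j'' = j)" for j''
      using True r unfolding cvc_def by auto
    have ns: "NS c r (0,j) (n+1,j') n = {c, j}" unfolding NS_def e2 using assms r c by auto
    have v34: "((j' = c) \<noteq> (j = j')) = True" "(j = c) = False" using True by auto
    show ?thesis unfolding V_pair v3 v4 ds ns ne v34 using True by auto
  qed
qed

lemma U4: assumes "1 \<le> j" "j \<le> n" "1 \<le> j'" "j' \<le> n"
  shows "V n x c r (n+1,j) (0,j') = (if j' = c \<and> okr n x \<and> es n x j then 1 else 0)"
proof -
  have v3: "cvc c (n+1,j) (0,j') j' 0 = (j' = c)" by (auto simp: cvc_def)
  have v4: "cvc c (n+1,j) (0,j') j (n+1) = ((j = c) \<noteq> (j' = j))" by (auto simp: cvc_def)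
  have ne: "((n+1,j) \<noteq> (0,j')) = True" by auto
  show ?thesis
  proof (cases "j' = c")
    case False
    then show ?thesis unfolding V_pair v3 v4 ne by auto
  next
    case True
    have e: "(((j'' = c) \<noteq> (j = j'')) \<noteq> (j' = j'')) = (j'' = j)" for j''
      using True by auto
    have ds: "DSc n x c j j' = es n x j" unfolding DSc_def e es_def by auto
    have e2: "cvc c (n+1,j) (0,j') j'' r = False" for j''
      using True r unfolding cvc_def by auto
    have ns: "NS c r (n+1,j) (0,j') n = {}" unfolding NS_def e2 by auto
    have v34: "((j = c) \<noteq> (j' = j)) = False" using True by auto
    show ?thesis unfolding V_pair v3 v4 ds ns ne v34 using True by auto
  qed
qed

lemma K1: assumes k: "1 \<le> k" "k \<le> n" and m: "1 \<le> m" "m \<le> n"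
  shows "(\<Sum>u\<in>up_set n. V n x c r (k,m) u) + (\<Sum>u\<in>up_set n. V n x c r u (k,m)) =
    (if okr n x \<and> es n x c \<and> k = r then (if m = c then 2 else -2) else 0)"
proof -
  define G :: int where "G = (if okr n x \<and> es n x c \<and> k = r then (if m = c then 2 else -2) else 0)"
  have pw: "V n x c r (k,m) (0,j) + V n x c r (k,m) (n+1,j) + (V n x c r (0,j) (k,m) + V n x c r (n+1,j) (k,m))
      = (if j = m then G else 0)" if j: "j \<in> {1..n}" for j
  proof -
    have j1: "1 \<le> j" "j \<le> n" using j by auto
    note VV = V1[OF k m j1] V2[OF k m j1] V3[OF k m j1] V4[OF k m j1]
    show ?thesis
    proof (cases "m = c")
      case True
      then show ?thesis unfolding VV G_def by (cases "j = c") auto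
    next
      case False
      then show ?thesis unfolding VV G_def by (cases "j = c"; cases "j = m") auto
    qed
  qed
  have "(\<Sum>u\<in>up_set n. V n x c r (k,m) u) + (\<Sum>u\<in>up_set n. V n x c r u (k,m)) =
      (\<Sum>j\<in>{1..n}. V n x c r (k,m) (0,j) + V n x c r (k,m) (n+1,j) + (V n x c r (0,j) (k,m) + V n x c r (n+1,j) (k,m)))"
    unfolding U_sum sum.distrib[symmetric] ..
  also have "\<dots> = (\<Sum>j\<in>{1..n}. if j = m then G else 0)" by (rule sum.cong) (use pw in auto)
  also have "\<dots> = G" using m by simp
  finally show ?thesis unfolding G_def .
qed

lemma K2: "(\<Sum>q\<in>up_set n \<times> up_set n. V n x c r (fst q) (snd q)) = (if okr n x \<and> es n x c then int n - 2 else 0)"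
proof -
  define Q :: int where "Q = (if okr n x \<and> es n x c then 1 else 0)"
  define al :: "nat \<Rightarrow> int" where "al j = (if j = c then - Q else 0)" for j
  define be :: "nat \<Rightarrow> int" where "be j = Q - (if j = c then Q else 0)" for j
  have pw: "V n x c r (0,j) (0,j') + V n x c r (0,j) (n+1,j') + (V n x c r (n+1,j) (0,j') + V n x c r (n+1,j) (n+1,j'))
      = (if j' = c then al j else 0) + (if j' = j then be j else 0)" if j: "j \<in> {1..n}" "j' \<in> {1..n}" for j j'
  proof -
    have j1: "1 \<le> j" "j \<le> n" "1 \<le> j'" "j' \<le> n" using j by auto
    note VV = U1[OF j1] U2[OF j1] U3[OF j1] U4[OF j1]
    show ?thesis unfolding VV al_def be_def Q_def by (cases "j = c"; cases "j' = c"; cases "j' = j") auto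
  qed
  have "(\<Sum>q\<in>up_set n \<times> up_set n. V n x c r (fst q) (snd q)) = (\<Sum>a\<in>up_set n. \<Sum>b\<in>up_set n. V n x c r a b)"
    by (simp add: sum.cartesian_product split_def)
  also have "\<dots> = (\<Sum>j\<in>{1..n}. \<Sum>j'\<in>{1..n}.
      V n x c r (0,j) (0,j') + V n x c r (0,j) (n+1,j') + (V n x c r (n+1,j) (0,j') + V n x c r (n+1,j) (n+1,j')))"
    unfolding U_sum sum.distrib by (simp add: ac_simps)
  also have "\<dots> = (\<Sum>j\<in>{1..n}. \<Sum>j'\<in>{1..n}. (if j' = c then al j else 0) + (if j' = j then be j else 0))"
    by (rule sum.cong, simp, rule sum.cong) (use pw in auto)
  also have "\<dots> = (\<Sum>j\<in>{1..n}. al j + be j)"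
    by (rule sum.cong) (use c in \<open>auto simp: sum.distrib\<close>)
  also have "\<dots> = - Q + (int n * Q - Q)"
    using c by (simp add: sum.distrib al_def be_def sum_subtractf)
  finally show ?thesis by (simp add: Q_def)
qed

end


lemma hw_one:
  assumes "hw s = 1"
  shows "\<exists>v. 1 \<le> v \<and> v \<le> length s \<and> (\<forall>k<length s. s ! k = (k = v - 1)) \<and> ident s = v"
proof -
  have "card {i. i < length s \<and> id (s ! i)} = 1"
    using assms unfolding hw_def by (simp add: length_filter_conv_card)
  then obtain i0 where i0: "{i. i < length s \<and> s ! i} = {i0}" by (auto simp: card_Suc_eq)
  then have i0l: "i0 < length s" "s ! i0" by auto
  have sk: "\<forall>k<length s. s ! k = (k = Suc i0 - 1)"
  proof (intro allI impI)
    fix k assume "k < length s"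
    then have "s ! k \<longleftrightarrow> k \<in> {i. i < length s \<and> s ! i}" by auto
    then show "s ! k = (k = Suc i0 - 1)" using i0 by auto
  qed
  have "ident s = Suc i0"
    unfolding ident_def
  proof (rule the_equality)
    show "1 \<le> Suc i0 \<and> Suc i0 \<le> length s \<and> s ! (Suc i0 - 1)" using i0l by auto
  next
    fix v assume v: "1 \<le> v \<and> v \<le> length s \<and> s ! (v - 1)"
    then have "v - 1 = i0" using sk by auto
    then show "v = Suc i0" using v by auto
  qed
  then show ?thesis using i0l sk by (intro exI[of _ "Suc i0"]) auto
qed

lemma len_x: assumes "length x = 4 * n"
  shows "length (xN n x) = n" "length (xE n x) = n" "length (xS n x) = n" "length (xW n x) = n"
  using assms by (auto simp: xN_def xE_def xS_def xW_def)

lemma nth_x: assumes "length x = 4 * n" "k < n"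
  shows "xN n x ! k = x ! k" "xE n x ! k = x ! (n + k)" "xS n x ! k = x ! (2*n + k)" "xW n x ! k = x ! (3*n + k)"
  using assms by (auto simp: xN_def xE_def xS_def xW_def)

theorem mainTheorem14:
  fixes n T :: nat and A :: "(nat \<times> nat) set" and x :: "bool list"
  assumes "A \<subseteq> {1..n} \<times> {1..n}"
    and "\<forall>u \<in> {1..n}. card {v \<in> {1..n}. (u, v) \<in> A} = T"
    and "length x = 4 * n"
    and "phi_one n x"
  shows "real_of_int (SigGammaUp n A x - SigGamma n A x
            - (int n - 2 * int T - 2) * SigPhi n x) / 4
         = (if phi_prop n x \<and> (ident (xW n x), ident (xN n x)) \<in> A then 1 else 0)"
proof -
  note Asub = assms(1) and lx = assms(3)
  obtain c where c: "1 \<le> c" "c \<le> n" and cN: "\<forall>k<n. xN n x ! k = (k = c - 1)" and ic: "ident (xN n x) = c"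
    using hw_one[of "xN n x"] assms(4) len_x[OF lx] by (auto simp: phi_one_def)
  obtain r where r: "1 \<le> r" "r \<le> n" and rW: "\<forall>k<n. xW n x ! k = (k = r - 1)" and ir: "ident (xW n x) = r"
    using hw_one[of "xW n x"] assms(4) len_x[OF lx] by (auto simp: phi_one_def)
  interpret setting n c r x using c r by unfold_locales
  have hc: "dang n x (DN j) = (j = c)" if "1 \<le> j" "j \<le> n" for j
  proof -
    have "dang n x (DN j) = xN n x ! (j - 1)" using nth_x[OF lx, of "j - 1"] that by simp
    then show ?thesis using cN that c by auto
  qed
  have hr: "dang n x (DW i) = (i = r)" if "1 \<le> i" "i \<le> n" for i
  proof -
    have "dang n x (DW i) = xW n x ! (i - 1)" using nth_x[OF lx, of "i - 1"] that by simp
    then show ?thesis using rW that r by auto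
  qed
  have n1: "1 \<le> n" using c by simp
  let ?U = "up_set n"
  let ?f = "V n x c r"
  have fA: "finite A" using Asub finite_subset by blast
  have fU: "finite ?U"
    by (rule finite_subset[of _ "{0..n+1}\<times>{1..n}"]) (auto simp: up_set_def)
  have AU: "A \<inter> ?U = {}" using Asub by (auto simp: up_set_def)
  have SG: "SigGamma n A x = (\<Sum>q\<in>A\<times>A. ?f (fst q) (snd q))"
    unfolding SigGamma_pairs[OF Asub]
  proof (rule sum.cong)
    fix q assume "q \<in> A \<times> A"
    then have "fst q \<in> {1..n} \<times> {1..n}" "snd q \<in> {1..n} \<times> {1..n}" using Asub by auto
    then show "GP n 1 n (cfg n 1 n x (\<lambda>i j. (i, j) = fst q) (\<lambda>i j. (i, j) = snd q) False) = ?f (fst q) (snd q)"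
      by (intro GP_V hc hr r) auto
  qed simp
  have SU: "SigGammaUp n A x = (\<Sum>q\<in>(A \<union> ?U)\<times>(A \<union> ?U). ?f (fst q) (snd q))"
    unfolding SigGammaUp_pairs[OF Asub]
  proof (rule sum.cong)
    fix q assume "q \<in> (A \<union> ?U) \<times> (A \<union> ?U)"
    then have "fst q \<in> {0..n+1} \<times> {1..n}" "snd q \<in> {0..n+1} \<times> {1..n}" using Asub by (auto simp: up_set_def)
    then show "GP n 0 (n+1) (cfg n 0 (n+1) x (\<lambda>i j. (i, j) = fst q) (\<lambda>i j. (i, j) = snd q) False) = ?f (fst q) (snd q)"
      by (intro GP_V hc hr r) auto
  qed simp
  define Q where "Q = (okr n x \<and> es n x c)"
  have SP: "SigPhi n x = (if Q then 1 else 0)"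
    using SigPhi_val[OF n1, of x] GP_Phi[OF n1 hc hr r c] unfolding Q_def okr_def es_def by simp
  have split: "(\<Sum>q\<in>(A \<union> ?U)\<times>(A \<union> ?U). ?f (fst q) (snd q)) =
      (\<Sum>q\<in>A\<times>A. ?f (fst q) (snd q)) + (\<Sum>p\<in>A. (\<Sum>u\<in>?U. ?f p u) + (\<Sum>u\<in>?U. ?f u p))
      + (\<Sum>q\<in>?U\<times>?U. ?f (fst q) (snd q))"
  proof -
    have cp: "\<And>X Y. (\<Sum>q\<in>X\<times>Y. ?f (fst q) (snd q)) = (\<Sum>a\<in>X. \<Sum>b\<in>Y. ?f a b)"
      by (simp add: sum.cartesian_product split_def)
    have un: "\<And>g. sum g (A \<union> ?U) = sum g A + sum g ?U"
      by (rule sum.union_disjoint[OF fA fU AU])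
    have sw: "(\<Sum>a\<in>?U. \<Sum>b\<in>A. ?f a b) = (\<Sum>b\<in>A. \<Sum>a\<in>?U. ?f a b)" by (rule sum.swap)
    show ?thesis unfolding cp un sum.distrib sw by (simp add: algebra_simps)
  qed
  have K1s: "(\<Sum>p\<in>A. (\<Sum>u\<in>?U. ?f p u) + (\<Sum>u\<in>?U. ?f u p)) =
      (\<Sum>p\<in>A. if Q \<and> fst p = r then (if snd p = c then 2 else -2) else 0)"
  proof (rule sum.cong)
    fix p assume "p \<in> A"
    then obtain k m where p: "p = (k, m)" "1 \<le> k" "k \<le> n" "1 \<le> m" "m \<le> n" using Asub by auto
    show "(\<Sum>u\<in>?U. ?f p u) + (\<Sum>u\<in>?U. ?f u p) = (if Q \<and> fst p = r then (if snd p = c then 2 else -2) else 0)"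
      unfolding p(1) K1[OF p(2-5)] Q_def by simp
  qed simp
  have rowA: "{p\<in>A. fst p = r} = (\<lambda>v. (r, v)) ` {v\<in>{1..n}. (r, v) \<in> A}" using Asub by force
  have cardrow: "card {p\<in>A. fst p = r} = T"
    unfolding rowA using assms(2) r by (subst card_image) (auto simp: inj_on_def)
  have rowsum: "(\<Sum>p\<in>A. if fst p = r then (-2::int) else 0) = - 2 * int T"
  proof -
    have "(\<Sum>p\<in>A. if fst p = r then (-2::int) else 0) = (\<Sum>p\<in>{p\<in>A. fst p = r}. -2)"
      by (rule sum.inter_filter[symmetric, OF fA])
    also have "\<dots> = - 2 * int T" using cardrow by simp
    finally show ?thesis .
  qed
  have G: "(\<Sum>p\<in>A. if Q \<and> fst p = r then (if snd p = c then 2 else -2) else (0::int)) =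
      (if Q then 4 * (if (r, c) \<in> A then 1 else 0) - 2 * int T else 0)"
  proof (cases Q)
    case True
    have "(\<Sum>p\<in>A. if Q \<and> fst p = r then (if snd p = c then 2 else -2) else (0::int)) =
        (\<Sum>p\<in>A. (if p = (r, c) then 4 else 0) + (if fst p = r then -2 else 0))"
      by (rule sum.cong) (auto simp: True)
    also have "\<dots> = (if (r, c) \<in> A then 4 else 0) - 2 * int T"
      using fA by (simp add: sum.distrib rowsum)
    finally show ?thesis using True by simp
  qed simp
  have K2': "(\<Sum>q\<in>?U\<times>?U. ?f (fst q) (snd q)) = (if Q then int n - 2 else 0)"
    unfolding K2 Q_def ..
  have main: "SigGammaUp n A x - SigGamma n A x - (int n - 2 * int T - 2) * SigPhi n x
      = 4 * (if Q \<and> (r, c) \<in> A then 1 else 0)"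
    unfolding SU split SG[symmetric] K1s G K2' SP by auto
  have pp: "phi_prop n x \<longleftrightarrow> Q"
  proof -
    have "xN n x = xS n x \<longleftrightarrow> es n x c"
    proof
      assume h: "xN n x = xS n x"
      show "es n x c" unfolding es_def
      proof
        fix j assume j: "j \<in> {1..n}"
        have "x ! (2 * n + (j - 1)) = (j - 1 = c - 1)"
          using h cN nth_x[OF lx, of "j - 1"] j by (metis atLeastAtMost_iff diff_less less_le_trans zero_less_one)
        then show "dang n x (DS j) = (j = c)" using j c by auto
      qed
    next
      assume h: "es n x c"
      show "xN n x = xS n x"
      proof (rule nth_equalityI)
        show "length (xN n x) = length (xS n x)" using len_x[OF lx] by simp
        fix k assume "k < length (xN n x)"
        then have k: "k < n" using len_x[OF lx] by simp
        have "Suc k \<in> {1..n}" using k by simp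
        then have "dang n x (DS (Suc k)) = (Suc k = c)" using h unfolding es_def by blast
        then show "xN n x ! k = xS n x ! k" using nth_x[OF lx k] cN k c by auto
      qed
    qed
    moreover have "xW n x = xE n x \<longleftrightarrow> okr n x"
    proof
      assume h: "xW n x = xE n x"
      show "okr n x" unfolding okr_def
      proof
        fix i assume i: "i \<in> {1..n}"
        then have "i - 1 < n" by auto
        then have "x ! (3 * n + (i - 1)) = x ! (n + (i - 1))" using h nth_x[OF lx] by metis
        then show "dang n x (DE i) = dang n x (DW i)" using i by auto
      qed
    next
      assume h: "okr n x"
      show "xW n x = xE n x"
      proof (rule nth_equalityI)
        show "length (xW n x) = length (xE n x)" using len_x[OF lx] by simp
        fix k assume "k < length (xW n x)"
        then have k: "k < n" using len_x[OF lx] by simp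
        have "Suc k \<in> {1..n}" using k by simp
        then have "dang n x (DE (Suc k)) = dang n x (DW (Suc k))" using h unfolding okr_def by blast
        then show "xW n x ! k = xE n x ! k" using nth_x[OF lx k] by simp
      qed
    qed
    ultimately show ?thesis unfolding phi_prop_def Q_def by blast
  qed
  show ?thesis unfolding main pp ir ic by simp
qed


end
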